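(* Let $(X,\perp,Y,T)$ be an implicative frame, and let $x,z\in X$ be arbitrary. Then: (1) $\Gamma x\cap\Gamma z\subseteq\Gamma x\odot\Gamma z$ iff $R_\le xz\subseteq R^{111}xz$; (2) $\Gamma x\odot\Gamma z\subseteq\Gamma x\cap\Gamma z$ iff $R^{111}xz\subseteq R_\le xz$; (3) the algebra $(\mathcal{G}(X),\subseteq,\cap,\vee,\bot,X,\Rightarrow)$ is a complete Heyting algebra in which $\Rightarrow$ is the residual of intersection iff $R^{111}xz=R_\le xz$ for all $x,z\in X$.
   Context: A sorted frame (polarity) is a triple $(X,\perp,Y)$ with $X,Y$ nonempty sets and ${\perp}\subseteq X\times Y$. For $U\subseteq X$ let $U'=\{y\in Y:\forall x\in U\ x\perp y\}$, and for $V\subseteq Y$ let ${}'V=\{x\in X:\forall y\in V\ x\perp y\}$. $A\subseteq X$ is stable if $A={}'(A')$; $B\subseteq Y$ co-stable if $B=({}'B)'$. $\mathcal{G}(X)$, $\mathcal{G}(Y)$ are the complete lattices of stable, resp. co-stable, sets (meets are intersections; joins are closures of unions: ${}'(W')$ for $W\subseteq X$, $W''=({}'W)'$ for $W\subseteq Y$); $\bot$ is the least stable set. Preorders: $x\le z$ iff $\{x\}'\subseteq\{z\}'$ on $X$; $y\le v$ iff ${}'\{y\}\subseteq{}'\{v\}$ on $Y$; separated means both are partial orders. $\Gamma u$ is the set of elements above $u$. For $T\subseteq Y\times X\times Y$, $T'\subseteq X\times X\times Y$ is $uT'xv$ iff $\forall y\,(yTxv\Rightarrow u\perp y)$. An implicative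 frame is $(X,\perp,Y,T)$ with: (F0) $x\perp y$ iff $uT'xy$ for all $u\in X$; (F1) separated; (F2) each $\{y: yTxv\}$ equals $\Gamma w$ for some $w\in Y$; (F3) if $yTxv$, $x_1\le x$, $v_1\le v$ then $yTx_1v_1$; (F4) for all $u,x\in X,v\in Y$, $\{x_1:uT'x_1v\}$ is stable and $\{v_1:uT'xv_1\}$ is co-stable. Derived relations: $vR^{\partial11}zx$ iff $xT'zv$; $uR^{111}zx$ iff $\forall v\in Y(vR^{\partial11}zx\Rightarrow u\perp v)$; $R^{111}xz=\{u\in X:uR^{111}xz\}$. Upper bound relation: $uR_\le xz$ iff $x\le u$ and $z\le u$, and $R_\le xz=\{u:uR_\le xz\}$. Operations: $A\blacktriangleright B=(\{y:\exists x\in A\,\exists v\in B\ yTxv\})''$; $A\Rightarrow C={}'(A\blacktriangleright C')$; $A\odot F={}'(\{u:\exists x_1\in A\,\exists z_1\in F\ uR^{111}x_1z_1\}')$. *)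

theory Defs
  imports Main
begin

text \<open>A sorted frame (X, perp, Y): X and Y are the (nonempty) types 'a and 'b,
  perp :: 'a => 'b => bool.  T :: 'b => 'a => 'b => bool, with T y x v meaning yTxv.\<close>

definition rprime :: "('a \<Rightarrow> 'b \<Rightarrow> bool) \<Rightarrow> 'a set \<Rightarrow> 'b set" where
  "rprime perp U = {y. \<forall>x\<in>U. perp x y}"

definition lprime :: "('a \<Rightarrow> 'b \<Rightarrow> bool) \<Rightarrow> 'b set \<Rightarrow> 'a set" where
  "lprime perp V = {x. \<forall>y\<in>V. perp x y}"

definition stable :: "('a \<Rightarrow> 'b \<Rightarrow> bool) \<Rightarrow> 'a set \<Rightarrow> bool" where
  "stable perp A \<longleftrightarrow> A = lprime perp (rprime perp A)"

definition costable :: "('a \<Rightarrow> 'b \<Rightarrow> bool) \<Rightarrow> 'b set \<Rightarrow> bool" where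
  "costable perp B \<longleftrightarrow> B = rprime perp (lprime perp B)"

definition leX :: "('a \<Rightarrow> 'b \<Rightarrow> bool) \<Rightarrow> 'a \<Rightarrow> 'a \<Rightarrow> bool" where
  "leX perp x z \<longleftrightarrow> rprime perp {x} \<subseteq> rprime perp {z}"

definition leY :: "('a \<Rightarrow> 'b \<Rightarrow> bool) \<Rightarrow> 'b \<Rightarrow> 'b \<Rightarrow> bool" where
  "leY perp y v \<longleftrightarrow> lprime perp {y} \<subseteq> lprime perp {v}"

definition GammaX :: "('a \<Rightarrow> 'b \<Rightarrow> bool) \<Rightarrow> 'a \<Rightarrow> 'a set" where
  "GammaX perp u = {x. leX perp u x}"

definition GammaY :: "('a \<Rightarrow> 'b \<Rightarrow> bool) \<Rightarrow> 'b \<Rightarrow> 'b set" where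
  "GammaY perp w = {y. leY perp w y}"

definition Tp :: "('a \<Rightarrow> 'b \<Rightarrow> bool) \<Rightarrow> ('b \<Rightarrow> 'a \<Rightarrow> 'b \<Rightarrow> bool) \<Rightarrow> 'a \<Rightarrow> 'a \<Rightarrow> 'b \<Rightarrow> bool" where
  "Tp perp T u x v \<longleftrightarrow> (\<forall>y. T y x v \<longrightarrow> perp u y)"

definition implicative_frame :: "('a \<Rightarrow> 'b \<Rightarrow> bool) \<Rightarrow> ('b \<Rightarrow> 'a \<Rightarrow> 'b \<Rightarrow> bool) \<Rightarrow> bool" where
  "implicative_frame perp T \<longleftrightarrow>
     \<comment> \<open>F0\<close>
     (\<forall>x y. perp x y \<longleftrightarrow> (\<forall>u. Tp perp T u x y)) \<and>
     \<comment> \<open>F1: separated\<close>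
     (\<forall>x z. leX perp x z \<and> leX perp z x \<longrightarrow> x = z) \<and>
     (\<forall>y v. leY perp y v \<and> leY perp v y \<longrightarrow> y = v) \<and>
     \<comment> \<open>F2\<close>
     (\<forall>x v. \<exists>w. {y. T y x v} = GammaY perp w) \<and>
     \<comment> \<open>F3\<close>
     (\<forall>y x v x1 v1. T y x v \<and> leX perp x1 x \<and> leY perp v1 v \<longrightarrow> T y x1 v1) \<and>
     \<comment> \<open>F4\<close>
     (\<forall>u x v. stable perp {x1. Tp perp T u x1 v} \<and> costable perp {v1. Tp perp T u x v1})"

definition Rd11 :: "('a \<Rightarrow> 'b \<Rightarrow> bool) \<Rightarrow> ('b \<Rightarrow> 'a \<Rightarrow> 'b \<Rightarrow> bool) \<Rightarrow> 'b \<Rightarrow> 'a \<Rightarrow> 'a \<Rightarrow> bool" where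
  "Rd11 perp T v z x \<longleftrightarrow> Tp perp T x z v"

definition R111 :: "('a \<Rightarrow> 'b \<Rightarrow> bool) \<Rightarrow> ('b \<Rightarrow> 'a \<Rightarrow> 'b \<Rightarrow> bool) \<Rightarrow> 'a \<Rightarrow> 'a \<Rightarrow> 'a \<Rightarrow> bool" where
  "R111 perp T u z x \<longleftrightarrow> (\<forall>v. Rd11 perp T v z x \<longrightarrow> perp u v)"

definition R111set :: "('a \<Rightarrow> 'b \<Rightarrow> bool) \<Rightarrow> ('b \<Rightarrow> 'a \<Rightarrow> 'b \<Rightarrow> bool) \<Rightarrow> 'a \<Rightarrow> 'a \<Rightarrow> 'a set" where
  "R111set perp T x z = {u. R111 perp T u x z}"

definition Rle :: "('a \<Rightarrow> 'b \<Rightarrow> bool) \<Rightarrow> 'a \<Rightarrow> 'a \<Rightarrow> 'a \<Rightarrow> bool" where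
  "Rle perp u x z \<longleftrightarrow> leX perp x u \<and> leX perp z u"

definition Rleset :: "('a \<Rightarrow> 'b \<Rightarrow> bool) \<Rightarrow> 'a \<Rightarrow> 'a \<Rightarrow> 'a set" where
  "Rleset perp x z = {u. Rle perp u x z}"

definition btri :: "('a \<Rightarrow> 'b \<Rightarrow> bool) \<Rightarrow> ('b \<Rightarrow> 'a \<Rightarrow> 'b \<Rightarrow> bool) \<Rightarrow> 'a set \<Rightarrow> 'b set \<Rightarrow> 'b set" where
  "btri perp T A B = rprime perp (lprime perp {y. \<exists>x\<in>A. \<exists>v\<in>B. T y x v})"

definition fimp :: "('a \<Rightarrow> 'b \<Rightarrow> bool) \<Rightarrow> ('b \<Rightarrow> 'a \<Rightarrow> 'b \<Rightarrow> bool) \<Rightarrow> 'a set \<Rightarrow> 'a set \<Rightarrow> 'a set" where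
  "fimp perp T A C = lprime perp (btri perp T A (rprime perp C))"

definition fodot :: "('a \<Rightarrow> 'b \<Rightarrow> bool) \<Rightarrow> ('b \<Rightarrow> 'a \<Rightarrow> 'b \<Rightarrow> bool) \<Rightarrow> 'a set \<Rightarrow> 'a set \<Rightarrow> 'a set" where
  "fodot perp T A F = lprime perp (rprime perp {u. \<exists>x1\<in>A. \<exists>z1\<in>F. R111 perp T u x1 z1})"

text \<open>(G(X), subset, inter, join, bot, X, =>) is a complete Heyting algebra in which
  => is the residual of intersection: G(X) is a complete lattice of sets closed under
  arbitrary intersections (meet = intersection, top = X), => maps G(X) into G(X), and
  for stable A, B, C:  C \<inter> A \<subseteq> B  iff  C \<subseteq> A => B.\<close>
definition complete_heyting_residuated ::
  "('a \<Rightarrow> 'b \<Rightarrow> bool) \<Rightarrow> ('b \<Rightarrow> 'a \<Rightarrow> 'b \<Rightarrow> bool) \<Rightarrow> bool" where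
  "complete_heyting_residuated perp T \<longleftrightarrow>
     (\<forall>S. (\<forall>A\<in>S. stable perp A) \<longrightarrow> stable perp (\<Inter>S)) \<and>
     (\<forall>A C. stable perp A \<and> stable perp C \<longrightarrow> stable perp (fimp perp T A C)) \<and>
     (\<forall>A B C. stable perp A \<and> stable perp B \<and> stable perp C \<longrightarrow>
        (C \<inter> A \<subseteq> B \<longleftrightarrow> C \<subseteq> fimp perp T A B))"

end

theory Submission
  imports Defs
begin

lemma lp_mem: "x \<in> lprime perp V \<longleftrightarrow> (\<forall>y\<in>V. perp x y)"
  by (simp add: lprime_def)

lemma rp_mem: "y \<in> rprime perp U \<longleftrightarrow> (\<forall>x\<in>U. perp x y)"
  by (simp add: rprime_def)

lemma lrl: "lprime perp (rprime perp (lprime perp V)) = lprime perp V"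
  unfolding lprime_def rprime_def by blast

lemma stable_lp: "stable perp (lprime perp V)"
  unfolding stable_def using lrl by metis

lemma leX_alt: "leX perp x z \<longleftrightarrow> (\<forall>y. perp x y \<longrightarrow> perp z y)"
  unfolding leX_def rprime_def by auto

lemma Gamma_lp: "GammaX perp x = lprime perp (rprime perp {x})"
  unfolding GammaX_def leX_alt lprime_def rprime_def by auto

lemma stable_Gamma: "stable perp (GammaX perp x)"
  using Gamma_lp stable_lp by metis

lemma stable_up: "stable perp A \<Longrightarrow> a \<in> A \<Longrightarrow> leX perp a b \<Longrightarrow> b \<in> A"
  unfolding stable_def leX_alt
  by (metis (no_types, lifting) lp_mem rp_mem)

lemma stable_int: "stable perp A \<Longrightarrow> stable perp B \<Longrightarrow> stable perp (A \<inter> B)"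
  unfolding stable_def lprime_def rprime_def by blast

lemma R111_lp: "R111set perp T x z = lprime perp {v. Tp perp T z x v}"
  unfolding R111set_def R111_def Rd11_def lprime_def by auto

lemma Rleset_Gamma: "Rleset perp x z = GammaX perp x \<inter> GammaX perp z"
  unfolding Rleset_def Rle_def GammaX_def by auto

context
  fixes perp :: "'a \<Rightarrow> 'b \<Rightarrow> bool" and T :: "'b \<Rightarrow> 'a \<Rightarrow> 'b \<Rightarrow> bool"
  assumes fr: "implicative_frame perp T"
begin

lemma F3: "T y x v \<Longrightarrow> leX perp x1 x \<Longrightarrow> T y x1 v"
  using fr unfolding implicative_frame_def leY_def by blast

lemma F4: "costable perp {v1. Tp perp T u x v1}"
  using fr unfolding implicative_frame_def by blast

lemma stable_R111: "stable perp (R111set perp T x z)"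
  using R111_lp stable_lp by metis

lemma Tp_R111: "Tp perp T u x v \<longleftrightarrow> (\<forall>w\<in>R111set perp T x u. perp w v)"
proof -
  have "{v1. Tp perp T u x v1} = rprime perp (R111set perp T x u)"
    using F4[of u x] unfolding costable_def R111_lp by simp
  thus ?thesis by (metis mem_Collect_eq rp_mem)
qed

lemma R111_anti:
  assumes "leX perp x x1" "leX perp z z1"
  shows "R111set perp T x1 z1 \<subseteq> R111set perp T x z"
proof -
  have "Tp perp T z x v \<Longrightarrow> Tp perp T z1 x1 v" for v
    using assms F3 unfolding Tp_def leX_alt by blast
  thus ?thesis unfolding R111_lp lprime_def by blast
qed

lemma fodot_Gamma:
  "fodot perp T (GammaX perp x) (GammaX perp z) = R111set perp T x z"
proof -
  have W: "{u. \<exists>x1\<in>GammaX perp x. \<exists>z1\<in>GammaX perp z. R111 perp T u x1 z1} = R111set perp T x z"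
  proof
    show "{u. \<exists>x1\<in>GammaX perp x. \<exists>z1\<in>GammaX perp z. R111 perp T u x1 z1} \<subseteq> R111set perp T x z"
      using R111_anti unfolding GammaX_def R111set_def by blast
    have "x \<in> GammaX perp x" "z \<in> GammaX perp z" unfolding GammaX_def leX_def by auto
    thus "R111set perp T x z \<subseteq> {u. \<exists>x1\<in>GammaX perp x. \<exists>z1\<in>GammaX perp z. R111 perp T u x1 z1}"
      unfolding R111set_def by blast
  qed
  show ?thesis unfolding fodot_def W using stable_R111 unfolding stable_def by metis
qed

lemma fimp_alt: "fimp perp T A C = {u. \<forall>x\<in>A. \<forall>v\<in>rprime perp C. Tp perp T u x v}"
proof -
  have "fimp perp T A C = lprime perp {y. \<exists>x\<in>A. \<exists>v\<in>rprime perp C. T y x v}"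
    unfolding fimp_def btri_def
    by (metis lrl lprime_def rprime_def)
  thus ?thesis unfolding lprime_def Tp_def by auto
qed

lemma fimp_sub:
  assumes "stable perp B"
  shows "D \<subseteq> fimp perp T A B \<longleftrightarrow> (\<forall>u\<in>D. \<forall>x\<in>A. R111set perp T x u \<subseteq> B)"
proof -
  have "D \<subseteq> fimp perp T A B \<longleftrightarrow> (\<forall>u\<in>D. \<forall>x\<in>A. \<forall>v\<in>rprime perp B. \<forall>w\<in>R111set perp T x u. perp w v)"
    unfolding fimp_alt Tp_R111 by blast
  also have "\<dots> \<longleftrightarrow> (\<forall>u\<in>D. \<forall>x\<in>A. R111set perp T x u \<subseteq> lprime perp (rprime perp B))"
    unfolding lprime_def by blast
  finally show ?thesis using assms unfolding stable_def by metis
qed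

lemma part3:
  "complete_heyting_residuated perp T \<longleftrightarrow> (\<forall>x z. R111set perp T x z = Rleset perp x z)"
proof
  assume H: "complete_heyting_residuated perp T"
  hence res: "\<And>A B C. stable perp A \<Longrightarrow> stable perp B \<Longrightarrow> stable perp C \<Longrightarrow>
        (C \<inter> A \<subseteq> B \<longleftrightarrow> C \<subseteq> fimp perp T A B)"
    unfolding complete_heyting_residuated_def by blast
  show "\<forall>x z. R111set perp T x z = Rleset perp x z"
  proof (intro allI)
    fix x z
    have xx: "x \<in> GammaX perp x" "z \<in> GammaX perp z" unfolding GammaX_def leX_def by auto
    have sB: "stable perp (GammaX perp x \<inter> GammaX perp z)"
      using stable_int stable_Gamma by metis
    have "GammaX perp z \<inter> GammaX perp x \<subseteq> GammaX perp x \<inter> GammaX perp z" by blast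
    moreover have "(GammaX perp z \<inter> GammaX perp x \<subseteq> GammaX perp x \<inter> GammaX perp z) = (GammaX perp z \<subseteq> fimp perp T (GammaX perp x) (GammaX perp x \<inter> GammaX perp z))"
      by (rule res[OF stable_Gamma sB stable_Gamma])
    ultimately have "GammaX perp z \<subseteq> fimp perp T (GammaX perp x) (GammaX perp x \<inter> GammaX perp z)"
      by (simp only:)
    hence "\<forall>u\<in>GammaX perp z. \<forall>x1\<in>GammaX perp x. R111set perp T x1 u \<subseteq> GammaX perp x \<inter> GammaX perp z"
      using fimp_sub[OF sB] by simp
    hence 1: "R111set perp T x z \<subseteq> GammaX perp x \<inter> GammaX perp z"
      using xx by simp
    have "\<forall>u\<in>GammaX perp z. \<forall>x1\<in>GammaX perp x. R111set perp T x1 u \<subseteq> R111set perp T x z"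
      using R111_anti unfolding GammaX_def by simp
    hence "GammaX perp z \<subseteq> fimp perp T (GammaX perp x) (R111set perp T x z)"
      using fimp_sub[OF stable_R111] by simp
    moreover have "(GammaX perp z \<inter> GammaX perp x \<subseteq> R111set perp T x z) = (GammaX perp z \<subseteq> fimp perp T (GammaX perp x) (R111set perp T x z))"
      by (rule res[OF stable_Gamma stable_R111 stable_Gamma])
    ultimately have 2: "GammaX perp z \<inter> GammaX perp x \<subseteq> R111set perp T x z"
      by (simp only:)
    show "R111set perp T x z = Rleset perp x z" unfolding Rleset_Gamma using 1 2 by blast
  qed
next
  assume H: "\<forall>x z. R111set perp T x z = Rleset perp x z"
  have a: "\<forall>S. (\<forall>A\<in>S. stable perp A) \<longrightarrow> stable perp (\<Inter>S)"
  proof (intro allI impI)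
    fix S :: "'a set set" assume "\<forall>A\<in>S. stable perp A"
    hence h: "\<And>A. A \<in> S \<Longrightarrow> lprime perp (rprime perp A) \<subseteq> A" unfolding stable_def by simp
    have "lprime perp (rprime perp (\<Inter>S)) \<subseteq> A" if "A \<in> S" for A
    proof -
      have "lprime perp (rprime perp (\<Inter>S)) \<subseteq> lprime perp (rprime perp A)"
        using that unfolding lprime_def rprime_def by blast
      thus ?thesis using h[OF that] by blast
    qed
    hence "lprime perp (rprime perp (\<Inter>S)) \<subseteq> \<Inter>S" by blast
    moreover have "\<Inter>S \<subseteq> lprime perp (rprime perp (\<Inter>S))"
      unfolding lprime_def rprime_def by blast
    ultimately show "stable perp (\<Inter>S)" unfolding stable_def by blast
  qed
  have b: "\<forall>A C. stable perp A \<and> stable perp C \<longrightarrow> stable perp (fimp perp T A C)"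
    unfolding fimp_def using stable_lp by blast
  have c: "C \<inter> A \<subseteq> B \<longleftrightarrow> C \<subseteq> fimp perp T A B"
    if sA: "stable perp A" and sB: "stable perp B" and sC: "stable perp C" for A B C
  proof -
    have e: "C \<subseteq> fimp perp T A B \<longleftrightarrow> (\<forall>u\<in>C. \<forall>x\<in>A. GammaX perp x \<inter> GammaX perp u \<subseteq> B)"
    proof -
      have "\<And>x u. R111set perp T x u = GammaX perp x \<inter> GammaX perp u"
        using H Rleset_Gamma by metis
      thus ?thesis by (simp only: fimp_sub[OF sB])
    qed
    have m: "GammaX perp x \<inter> GammaX perp u \<subseteq> C \<inter> A" if "u \<in> C" "x \<in> A" for u x
      using stable_up[OF sA that(2)] stable_up[OF sC that(1)] unfolding GammaX_def by blast
    have r: "w \<in> GammaX perp w \<inter> GammaX perp w" for w unfolding GammaX_def leX_def by auto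
    show ?thesis
    proof
      assume "C \<inter> A \<subseteq> B" thus "C \<subseteq> fimp perp T A B" using e m by blast
    next
      assume "C \<subseteq> fimp perp T A B"
      hence "\<forall>u\<in>C. \<forall>x\<in>A. GammaX perp x \<inter> GammaX perp u \<subseteq> B" using e by simp
      thus "C \<inter> A \<subseteq> B" using r by blast
    qed
  qed
  show "complete_heyting_residuated perp T"
    unfolding complete_heyting_residuated_def
  proof (intro conjI)
    show "\<forall>A B C. stable perp A \<and> stable perp B \<and> stable perp C \<longrightarrow> (C \<inter> A \<subseteq> B) = (C \<subseteq> fimp perp T A B)"
    proof (intro allI impI)
      fix A B C assume "stable perp A \<and> stable perp B \<and> stable perp C"
      thus "(C \<inter> A \<subseteq> B) = (C \<subseteq> fimp perp T A B)" using c by simp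
    qed
  qed (rule a, rule b)
qed

end

theorem proposition3p14:
  fixes perp :: "'a \<Rightarrow> 'b \<Rightarrow> bool" and T :: "'b \<Rightarrow> 'a \<Rightarrow> 'b \<Rightarrow> bool"
  assumes "implicative_frame perp T"
  shows "(\<forall>x z. GammaX perp x \<inter> GammaX perp z \<subseteq> fodot perp T (GammaX perp x) (GammaX perp z)
                \<longleftrightarrow> Rleset perp x z \<subseteq> R111set perp T x z)
       \<and> (\<forall>x z. fodot perp T (GammaX perp x) (GammaX perp z) \<subseteq> GammaX perp x \<inter> GammaX perp z
                \<longleftrightarrow> R111set perp T x z \<subseteq> Rleset perp x z)
       \<and> (complete_heyting_residuated perp T \<longleftrightarrow> (\<forall>x z. R111set perp T x z = Rleset perp x z))"
  by (simp only: fodot_Gamma[OF assms] part3[OF assms] Rleset_Gamma) simp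

end
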